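(* Let $r$ be an $\mathfrak s$-matrix on a pre-Lie algebra $(\mathfrak g,\cdot_{\mathfrak g})$. Then the map $\varrho:\mathfrak g^*\to\mathfrak{gl}(\mathfrak g)$, $\varrho(\alpha)(x)=[r^\sharp(\alpha),x]_{\mathfrak g}+r^\sharp(L^*_x\alpha)$, is a representation of the Lie algebra $(\mathfrak g^*,[\cdot,\cdot]_r)$ on $\mathfrak g$.
   Context: A pre-Lie algebra is a finite-dimensional vector space $\mathfrak g$ over a field of characteristic $0$ with product $\cdot$ satisfying $(x\cdot y)\cdot z-x\cdot(y\cdot z)=(y\cdot x)\cdot z-y\cdot(x\cdot z)$; $[x,y]_{\mathfrak g}=x\cdot y-y\cdot x$. Define $\langle L^*_x\alpha,y\rangle=-\langle\alpha,x\cdot y\rangle$. For $r\in\mathrm{Sym}^2(\mathfrak g)$, $\langle r^\sharp(\alpha),\beta\rangle=r(\alpha,\beta)$. For $r=\sum_ia_i\otimes b_i$, $[r,r]=-\sum_{i,j}a_i\cdot a_j\otimes b_i\otimes b_j+\sum_{i,j}a_i\otimes b_i\cdot a_j\otimes b_j+\sum_{i,j}a_i\otimes a_j\otimes[b_i,b_j]_{\mathfrak g}$; $r$ is an $\mathfrak s$-matrix if $r\in\mathrm{Sym}^2(\mathfrak g)$ and $[r,r]=0$. $[\alpha,\beta]_r=L^*_{r^\sharp(\alpha)}\beta-L^*_{r^\sharp(\beta)}\alpha$ (this is a Lie bracket on $\mathfrak g^*$ when $r$ is an $\mathfrak s$-matrix). *)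

theory Defs
  imports Main
begin

text \<open>Coordinate model: the finite-dimensional vector space g is k^n, realised as
  functions 'n \<Rightarrow> 'k for a finite index type 'n; the dual g* is realised in the same
  way via the standard pairing. Tensors in g\<otimes>g and g\<otimes>g\<otimes>g are coefficient arrays.\<close>

definition vadd :: "('n \<Rightarrow> 'k::field) \<Rightarrow> ('n \<Rightarrow> 'k) \<Rightarrow> ('n \<Rightarrow> 'k)" where
  "vadd x y = (\<lambda>i. x i + y i)"

definition vsub :: "('n \<Rightarrow> 'k::field) \<Rightarrow> ('n \<Rightarrow> 'k) \<Rightarrow> ('n \<Rightarrow> 'k)" where
  "vsub x y = (\<lambda>i. x i - y i)"

definition vsmul :: "'k::field \<Rightarrow> ('n \<Rightarrow> 'k) \<Rightarrow> ('n \<Rightarrow> 'k)" where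
  "vsmul c x = (\<lambda>i. c * x i)"

definition bvec :: "'n \<Rightarrow> ('n \<Rightarrow> 'k::field)" where
  "bvec i = (\<lambda>j. if j = i then 1 else 0)"

definition pair :: "('n::finite \<Rightarrow> 'k::field) \<Rightarrow> ('n \<Rightarrow> 'k) \<Rightarrow> 'k" where
  "pair \<alpha> x = (\<Sum>i\<in>UNIV. \<alpha> i * x i)"

definition lin_map :: "(('n \<Rightarrow> 'k::field) \<Rightarrow> ('m \<Rightarrow> 'k)) \<Rightarrow> bool" where
  "lin_map f \<longleftrightarrow> (\<forall>x y. f (vadd x y) = vadd (f x) (f y)) \<and> (\<forall>c x. f (vsmul c x) = vsmul c (f x))"

definition bilin_map :: "(('n \<Rightarrow> 'k::field) \<Rightarrow> ('n \<Rightarrow> 'k) \<Rightarrow> ('n \<Rightarrow> 'k)) \<Rightarrow> bool" where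
  "bilin_map m \<longleftrightarrow> (\<forall>x. lin_map (m x)) \<and> (\<forall>y. lin_map (\<lambda>x. m x y))"

definition pre_lie :: "(('n \<Rightarrow> 'k::field) \<Rightarrow> ('n \<Rightarrow> 'k) \<Rightarrow> ('n \<Rightarrow> 'k)) \<Rightarrow> bool" where
  "pre_lie m \<longleftrightarrow> bilin_map m \<and>
     (\<forall>x y z. vsub (m (m x y) z) (m x (m y z)) = vsub (m (m y x) z) (m y (m x z)))"

definition comm :: "(('n \<Rightarrow> 'k::field) \<Rightarrow> ('n \<Rightarrow> 'k) \<Rightarrow> ('n \<Rightarrow> 'k)) \<Rightarrow> ('n \<Rightarrow> 'k) \<Rightarrow> ('n \<Rightarrow> 'k) \<Rightarrow> ('n \<Rightarrow> 'k)" where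
  "comm m x y = vsub (m x y) (m y x)"

text \<open>L^*_x alpha, determined by <L^*_x alpha, y> = - <alpha, x.y>\<close>
definition Lstar :: "(('n::finite \<Rightarrow> 'k::field) \<Rightarrow> ('n \<Rightarrow> 'k) \<Rightarrow> ('n \<Rightarrow> 'k)) \<Rightarrow> ('n \<Rightarrow> 'k) \<Rightarrow> ('n \<Rightarrow> 'k) \<Rightarrow> ('n \<Rightarrow> 'k)" where
  "Lstar m x \<alpha> = (\<lambda>j. - pair \<alpha> (m x (bvec j)))"

text \<open>r = sum_{i,j} r i j e_i \<otimes> e_j; r(alpha,beta) = sum r i j alpha_i beta_j;
  r^sharp determined by <r^sharp alpha, beta> = r(alpha, beta)\<close>
definition sharp :: "('n::finite \<Rightarrow> 'n \<Rightarrow> 'k::field) \<Rightarrow> ('n \<Rightarrow> 'k) \<Rightarrow> ('n \<Rightarrow> 'k)" where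
  "sharp r \<alpha> = (\<lambda>j. \<Sum>i\<in>UNIV. r i j * \<alpha> i)"

definition sym2 :: "('n \<Rightarrow> 'n \<Rightarrow> 'k) \<Rightarrow> bool" where
  "sym2 r \<longleftrightarrow> (\<forall>i j. r i j = r j i)"

text \<open>[r,r] for r = sum_{(i,j)} (r i j e_i) \<otimes> e_j, as coefficient array of g\<otimes>g\<otimes>g\<close>
definition rr :: "(('n::finite \<Rightarrow> 'k::field) \<Rightarrow> ('n \<Rightarrow> 'k) \<Rightarrow> ('n \<Rightarrow> 'k)) \<Rightarrow> ('n \<Rightarrow> 'n \<Rightarrow> 'k)
    \<Rightarrow> 'n \<Rightarrow> 'n \<Rightarrow> 'n \<Rightarrow> 'k" where
  "rr m r p q s =
     - (\<Sum>i\<in>UNIV. \<Sum>j\<in>UNIV. \<Sum>k\<in>UNIV. \<Sum>l\<in>UNIV.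
          m (vsmul (r i j) (bvec i)) (vsmul (r k l) (bvec k)) p * bvec j q * bvec l s)
     + (\<Sum>i\<in>UNIV. \<Sum>j\<in>UNIV. \<Sum>k\<in>UNIV. \<Sum>l\<in>UNIV.
          vsmul (r i j) (bvec i) p * m (bvec j) (vsmul (r k l) (bvec k)) q * bvec l s)
     + (\<Sum>i\<in>UNIV. \<Sum>j\<in>UNIV. \<Sum>k\<in>UNIV. \<Sum>l\<in>UNIV.
          vsmul (r i j) (bvec i) p * vsmul (r k l) (bvec k) q * comm m (bvec j) (bvec l) s)"

definition s_matrix :: "(('n::finite \<Rightarrow> 'k::field) \<Rightarrow> ('n \<Rightarrow> 'k) \<Rightarrow> ('n \<Rightarrow> 'k)) \<Rightarrow> ('n \<Rightarrow> 'n \<Rightarrow> 'k) \<Rightarrow> bool" where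
  "s_matrix m r \<longleftrightarrow> sym2 r \<and> (\<forall>p q s. rr m r p q s = 0)"

definition r_bracket :: "(('n::finite \<Rightarrow> 'k::field) \<Rightarrow> ('n \<Rightarrow> 'k) \<Rightarrow> ('n \<Rightarrow> 'k)) \<Rightarrow> ('n \<Rightarrow> 'n \<Rightarrow> 'k)
    \<Rightarrow> ('n \<Rightarrow> 'k) \<Rightarrow> ('n \<Rightarrow> 'k) \<Rightarrow> ('n \<Rightarrow> 'k)" where
  "r_bracket m r \<alpha> \<beta> = vsub (Lstar m (sharp r \<alpha>) \<beta>) (Lstar m (sharp r \<beta>) \<alpha>)"

definition rho :: "(('n::finite \<Rightarrow> 'k::field) \<Rightarrow> ('n \<Rightarrow> 'k) \<Rightarrow> ('n \<Rightarrow> 'k)) \<Rightarrow> ('n \<Rightarrow> 'n \<Rightarrow> 'k)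
    \<Rightarrow> ('n \<Rightarrow> 'k) \<Rightarrow> ('n \<Rightarrow> 'k) \<Rightarrow> ('n \<Rightarrow> 'k)" where
  "rho m r \<alpha> x = vadd (comm m (sharp r \<alpha>) x) (sharp r (Lstar m x \<alpha>))"

definition lie_rep :: "(('n \<Rightarrow> 'k::field) \<Rightarrow> ('n \<Rightarrow> 'k) \<Rightarrow> ('n \<Rightarrow> 'k))
    \<Rightarrow> (('n \<Rightarrow> 'k) \<Rightarrow> ('m \<Rightarrow> 'k) \<Rightarrow> ('m \<Rightarrow> 'k)) \<Rightarrow> bool" where
  "lie_rep br \<rho> \<longleftrightarrow>
     (\<forall>\<alpha>. lin_map (\<rho> \<alpha>)) \<and>
     (\<forall>\<alpha> \<beta>. \<rho> (vadd \<alpha> \<beta>) = (\<lambda>x. vadd (\<rho> \<alpha> x) (\<rho> \<beta> x))) \<and>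
     (\<forall>c \<alpha>. \<rho> (vsmul c \<alpha>) = (\<lambda>x. vsmul c (\<rho> \<alpha> x))) \<and>
     (\<forall>\<alpha> \<beta> x. \<rho> (br \<alpha> \<beta>) x = vsub (\<rho> \<alpha> (\<rho> \<beta> x)) (\<rho> \<beta> (\<rho> \<alpha> x)))"

end

theory Submission imports Defs "HOL-Library.Function_Algebras" begin

lemma vadd_eq: "vadd x y = x + y" by (simp add: vadd_def fun_eq_iff)
lemma vsub_eq: "vsub x y = x - y" by (simp add: vsub_def fun_eq_iff)

lemma mult_delta1: "(a::'k::field) * (if P then 1 else 0) = (if P then a else 0)" by simp
lemma mult_delta2: "(if P then 1 else 0) * (a::'k::field) = (if P then a else 0)" by simp
lemma sum_if_const: "(\<Sum>k\<in>A. if P then f k else 0) = (if P then (\<Sum>k\<in>A. f k) else 0)" by auto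

lemma lin_add: "lin_map f \<Longrightarrow> f (x + y) = f x + f y"
  by (metis lin_map_def vadd_eq)
lemma lin_smul: "lin_map f \<Longrightarrow> f (vsmul c x) = vsmul c (f x)"
  by (simp add: lin_map_def)
lemma lin_zero: "lin_map f \<Longrightarrow> f 0 = (0::'m \<Rightarrow> 'k::field)"
proof -
  assume l: "lin_map f"
  have "(0::'n\<Rightarrow>'k) = vsmul 0 0" by (simp add: vsmul_def fun_eq_iff)
  then have "f 0 = vsmul 0 (f 0)" using lin_smul[OF l] by metis
  then show ?thesis by (simp add: vsmul_def fun_eq_iff)
qed
lemma lin_neg: "lin_map f \<Longrightarrow> f (- x) = - f (x::'n \<Rightarrow> 'k::field)"
proof -
  assume l: "lin_map f"
  have "- x = vsmul (-1) x" by (simp add: vsmul_def fun_eq_iff)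
  then have "f (- x) = vsmul (-1) (f x)" using lin_smul[OF l, of "-1" x] by simp
  then show ?thesis by (simp add: vsmul_def fun_eq_iff)
qed
lemma lin_diff: "lin_map f \<Longrightarrow> f (x - y) = f x - f (y::'n \<Rightarrow> 'k::field)"
  using lin_add[of f x "-y"] lin_neg[of f y] by simp

lemma lin_sum: assumes l: "lin_map f" and "finite S"
  shows "f (\<lambda>i. \<Sum>j\<in>S. c j * u j i) = (\<lambda>i. \<Sum>j\<in>S. c j * f (u j) i)"
  using assms(2)
proof (induction S rule: finite_induct)
  case empty
  then show ?case using lin_zero[OF l] by (simp add: zero_fun_def)
next
  case (insert a F)
  have "(\<lambda>i. \<Sum>j\<in>insert a F. c j * u j i) = vsmul (c a) (u a) + (\<lambda>i. \<Sum>j\<in>F. c j * u j i)"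
    using insert by (simp add: vsmul_def fun_eq_iff)
  then have "f (\<lambda>i. \<Sum>j\<in>insert a F. c j * u j i) = f (vsmul (c a) (u a)) + f (\<lambda>i. \<Sum>j\<in>F. c j * u j i)"
    using lin_add[OF l] by simp
  also have "\<dots> = vsmul (c a) (f (u a)) + (\<lambda>i. \<Sum>j\<in>F. c j * f (u j) i)"
    using insert lin_smul[OF l] by simp
  finally show ?case using insert by (simp add: vsmul_def fun_eq_iff)
qed

lemma decomp: "(y::'n::finite \<Rightarrow> 'k::field) = (\<lambda>i. \<Sum>j\<in>UNIV. y j * bvec j i)"
  by (simp add: bvec_def fun_eq_iff mult_delta1)

lemma lin_decomp: "lin_map f \<Longrightarrow> f (y::'n::finite \<Rightarrow> 'k::field) i = (\<Sum>j\<in>UNIV. y j * f (bvec j) i)"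
proof -
  assume l: "lin_map f"
  have "f y = f (\<lambda>i. \<Sum>j\<in>UNIV. y j * bvec j i)" by (rule arg_cong[OF decomp])
  also have "\<dots> = (\<lambda>i. \<Sum>j\<in>UNIV. y j * f (bvec j) i)" by (rule lin_sum[OF l]) simp
  finally show ?thesis by simp
qed


lemma pair_bvec1[simp]: "pair (bvec j) v = v j" by (simp add: pair_def bvec_def mult_delta2 sum.delta)
lemma pair_bvec2[simp]: "pair v (bvec j) = v j" by (simp add: pair_def bvec_def mult_delta1 sum.delta)
lemma pair_add1: "pair (a + b) v = pair a v + pair b v" by (simp add: pair_def algebra_simps sum.distrib)
lemma pair_add2: "pair v (a + b) = pair v a + pair v b" by (simp add: pair_def algebra_simps sum.distrib)
lemma pair_diff1: "pair (a - b) v = pair a v - pair b v" by (simp add: pair_def algebra_simps sum_subtractf)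
lemma pair_diff2: "pair v (a - b) = pair v a - pair v b" by (simp add: pair_def algebra_simps sum_subtractf)
lemma pair_neg1: "pair (- a) v = - pair a v" by (simp add: pair_def sum_negf)
lemma pair_neg2: "pair v (- a) = - pair v a" by (simp add: pair_def sum_negf)
lemma pair_comm: "pair a b = pair b a" by (simp add: pair_def mult.commute)
lemma pair_sum2: "pair v (\<lambda>i. \<Sum>p\<in>UNIV. c p * u p i) = (\<Sum>p\<in>UNIV. c p * pair v (u p))"
  unfolding pair_def sum_distrib_left by (subst sum.swap) (simp add: mult.left_commute)
lemma vec_eq: "(\<And>g. pair g u = pair g v) \<Longrightarrow> u = v"
  by (metis pair_bvec1 ext)

lemma sharp_add: "sharp r (a + b) = sharp r a + sharp r b" by (simp add: sharp_def algebra_simps sum.distrib fun_eq_iff)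
lemma sharp_diff: "sharp r (a - b) = sharp r a - sharp r b" by (simp add: sharp_def algebra_simps sum_subtractf fun_eq_iff)
lemma sharp_neg: "sharp r (- a) = - sharp r a" by (simp add: sharp_def sum_negf fun_eq_iff)
lemma sharp_smul: "sharp r (vsmul c a) = vsmul c (sharp r a)" by (simp add: sharp_def vsmul_def sum_distrib_left algebra_simps fun_eq_iff)
lemma sharp_sym: "sym2 r \<Longrightarrow> pair g (sharp r d) = pair d (sharp r g)"
  unfolding pair_def sharp_def sym2_def sum_distrib_left
  by (subst sum.swap) (simp add: mult.left_commute mult.commute)
lemma sharp_V: "sym2 r \<Longrightarrow> (\<lambda>i. \<Sum>q\<in>UNIV. b q * r i q) = sharp r b"
  unfolding sharp_def sym2_def by (simp add: mult.commute fun_eq_iff)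

lemma Lstar_add_a: "Lstar m x (a + b) = Lstar m x a + Lstar m x b" by (simp add: Lstar_def pair_add1 fun_eq_iff)
lemma Lstar_smul_a: "Lstar m x (vsmul c a) = vsmul c (Lstar m x a)"
  by (simp add: Lstar_def pair_def vsmul_def sum_distrib_left algebra_simps fun_eq_iff)
lemma Lstar_diff_a: "Lstar m x (a - b) = Lstar m x a - Lstar m x b" by (simp add: Lstar_def pair_diff1 fun_eq_iff)

lemma ifz_mult1: "(if P then a else 0) * (b::'k::field) = (if P then a * b else 0)" by simp
lemma ifz_mult2: "(b::'k::field) * (if P then a else 0) = (if P then b * a else 0)" by simp

lemma bil_exp:
  fixes F :: "('n::finite \<Rightarrow> 'k::field) \<Rightarrow> ('n \<Rightarrow> 'k) \<Rightarrow> ('n \<Rightarrow> 'k)"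
  assumes l1: "\<And>w. lin_map (\<lambda>x. F x w)" and l2: "\<And>x. lin_map (F x)"
  shows "F u w p = (\<Sum>i\<in>UNIV. \<Sum>k\<in>UNIV. u i * w k * F (bvec i) (bvec k) p)"
proof -
  have "F u w p = (\<Sum>i\<in>UNIV. u i * F (bvec i) w p)" using lin_decomp[OF l1[of w], where y=u] by simp
  also have "\<dots> = (\<Sum>i\<in>UNIV. u i * (\<Sum>k\<in>UNIV. w k * F (bvec i) (bvec k) p))"
    using lin_decomp[OF l2, where y=w] by simp
  finally show ?thesis by (simp add: sum_distrib_left mult.assoc)
qed

locale PL =
  fixes m :: "('n::finite \<Rightarrow> 'k::field) \<Rightarrow> ('n \<Rightarrow> 'k) \<Rightarrow> ('n \<Rightarrow> 'k)"
    and r :: "'n \<Rightarrow> 'n \<Rightarrow> 'k"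
  assumes pl: "pre_lie m" and sm: "s_matrix m r"
begin

lemma ml2: "lin_map (m x)" using pl by (simp add: pre_lie_def bilin_map_def)
lemma ml1: "lin_map (\<lambda>x. m x y)" using pl by (simp add: pre_lie_def bilin_map_def)
lemma symr: "sym2 r" using sm by (simp add: s_matrix_def)
lemma rr0: "rr m r p q s = 0" using sm by (simp add: s_matrix_def)
lemma prelie: "m (m x y) z - m x (m y z) = m (m y x) z - m y (m x z)"
  using pl by (simp add: pre_lie_def vsub_eq)

lemma m_add1: "m (x + y) z = m x z + m y z" using lin_add[OF ml1] .
lemma m_add2: "m z (x + y) = m z x + m z y" using lin_add[OF ml2] .
lemma m_diff1: "m (x - y) z = m x z - m y z" using lin_diff[OF ml1] .
lemma m_diff2: "m z (x - y) = m z x - m z y" using lin_diff[OF ml2] .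
lemma m_neg1: "m (- x) z = - m x z" using lin_neg[OF ml1] .
lemma m_neg2: "m z (- x) = - m z x" using lin_neg[OF ml2] .
lemma m_smul1: "m (vsmul c x) z = vsmul c (m x z)" using lin_smul[OF ml1] .
lemma m_smul2: "m z (vsmul c x) = vsmul c (m z x)" using lin_smul[OF ml2] .

lemma comm_eq: "comm m x y = m x y - m y x" by (simp add: comm_def vsub_eq)
lemma comm_anti: "comm m x y = - comm m y x" by (simp add: comm_eq)
lemma comm_add1: "comm m (x + y) z = comm m x z + comm m y z" by (simp add: comm_eq m_add1 m_add2)
lemma comm_add2: "comm m z (x + y) = comm m z x + comm m z y" by (simp add: comm_eq m_add1 m_add2)
lemma comm_diff1: "comm m (x - y) z = comm m x z - comm m y z" by (simp add: comm_eq m_diff1 m_diff2)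
lemma comm_diff2: "comm m z (x - y) = comm m z x - comm m z y" by (simp add: comm_eq m_diff1 m_diff2)
lemma comm_smul1: "comm m (vsmul c x) z = vsmul c (comm m x z)"
  unfolding comm_eq m_smul1 m_smul2 by (simp add: comm_eq m_smul1 m_smul2 vsmul_def fun_eq_iff algebra_simps)
lemma comm_smul2: "comm m z (vsmul c x) = vsmul c (comm m z x)"
  unfolding comm_eq m_smul1 m_smul2 by (simp add: comm_eq m_smul1 m_smul2 vsmul_def fun_eq_iff algebra_simps)
lemma cl2: "lin_map (comm m z)" by (simp add: lin_map_def vadd_eq comm_add2 comm_smul2)

lemma jacobi: "comm m a (comm m b x) - comm m b (comm m a x) = comm m (comm m a b) x"
proof -
  have P1: "m (m a b) x - m a (m b x) - (m (m b a) x - m b (m a x)) = 0" using prelie by simp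
  have P2: "m (m a x) b - m a (m x b) - (m (m x a) b - m x (m a b)) = 0" using prelie by simp
  have P3: "m (m b x) a - m b (m x a) - (m (m x b) a - m x (m b a)) = 0" using prelie by simp
  have "comm m a (comm m b x) - comm m b (comm m a x) - comm m (comm m a b) x
     = - (m (m a b) x - m a (m b x) - (m (m b a) x - m b (m a x)))
     + (m (m a x) b - m a (m x b) - (m (m x a) b - m x (m a b)))
     - (m (m b x) a - m b (m x a) - (m (m x b) a - m x (m b a)))"
    unfolding comm_eq m_diff1 m_diff2 by (simp add: algebra_simps)
  then show ?thesis using P1 P2 P3 by simp
qed

lemma Lstar_add_x: "Lstar m (x + y) a = Lstar m x a + Lstar m y a"
  by (simp add: Lstar_def m_add1 pair_add2 fun_eq_iff)
lemma Lstar_diff_x: "Lstar m (x - y) a = Lstar m x a - Lstar m y a"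
  by (simp add: Lstar_def m_diff1 pair_diff2 fun_eq_iff)
lemma Lstar_neg_x: "Lstar m (- x) a = - Lstar m x a"
  by (simp add: Lstar_def m_neg1 pair_neg2 fun_eq_iff)

lemma Lstar_pair: "pair (Lstar m x a) y = - pair a (m x y)"
proof -
  have "pair a (m x y) = (\<Sum>i\<in>UNIV. a i * (\<Sum>j\<in>UNIV. y j * m x (bvec j) i))"
    unfolding pair_def using lin_decomp[OF ml2[of x], where y=y] by simp
  also have "\<dots> = (\<Sum>j\<in>UNIV. y j * pair a (m x (bvec j)))"
    unfolding pair_def sum_distrib_left by (subst sum.swap) (simp add: mult.left_commute)
  moreover have "pair (Lstar m x a) y = (\<Sum>j\<in>UNIV. - pair a (m x (bvec j)) * y j)"
    unfolding Lstar_def by (subst pair_def) simp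
  ultimately show ?thesis by (simp add: sum_negf mult.commute)
qed

lemma Lstar_rep: "Lstar m (comm m x a) b = Lstar m x (Lstar m a b) - Lstar m a (Lstar m x b)"
proof (rule ext)
  fix j
  have P: "m (m x a) (bvec j) - m (m a x) (bvec j) = m x (m a (bvec j)) - m a (m x (bvec j))"
    using prelie[of x a "bvec j"] by (simp add: algebra_simps)
  have 1: "Lstar m x (Lstar m a b) j = pair b (m a (m x (bvec j)))"
    by (simp add: Lstar_def[of m x "Lstar m a b"] Lstar_pair)
  have 2: "Lstar m a (Lstar m x b) j = pair b (m x (m a (bvec j)))"
    by (simp add: Lstar_def[of m a "Lstar m x b"] Lstar_pair)
  have 3: "Lstar m (comm m x a) b j = - pair b (m (m x a) (bvec j) - m (m a x) (bvec j))"
    by (simp add: Lstar_def comm_eq m_diff1)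
  show "Lstar m (comm m x a) b j = (Lstar m x (Lstar m a b) - Lstar m a (Lstar m x b)) j"
    unfolding 3 P using 1 2 by (simp add: pair_diff2)
qed


lemma m_exp: "m u w p = (\<Sum>i\<in>UNIV. \<Sum>k\<in>UNIV. u i * w k * m (bvec i) (bvec k) p)"
  by (rule bil_exp[OF ml1 ml2])
lemma cl1: "lin_map (\<lambda>x. comm m x z)" by (simp add: lin_map_def vadd_eq comm_add1 comm_smul1)
lemma comm_exp: "comm m u w p = (\<Sum>i\<in>UNIV. \<Sum>k\<in>UNIV. u i * w k * comm m (bvec i) (bvec k) p)"
  by (rule bil_exp[OF cl1 cl2])

definition col :: "'n \<Rightarrow> 'n \<Rightarrow> 'k" where "col q = (\<lambda>i. r i q)"

lemma bvec_app: "bvec j q = (if q = j then (1::'k) else 0)" by (simp add: bvec_def)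
lemma vsmul_app: "vsmul c x q = c * x q" by (simp add: vsmul_def)
lemma msm: "m (vsmul c (bvec i)) (vsmul d (bvec k)) p = c * (d * m (bvec i) (bvec k) p)"
  by (simp only: m_smul1 m_smul2) (simp add: vsmul_def)
lemma csm: "comm m (bvec i) (bvec k) p = m (bvec i) (bvec k) p - m (bvec k) (bvec i) p"
  by (simp add: comm_eq)

lemma T1: "(\<Sum>i\<in>UNIV. \<Sum>j\<in>UNIV. \<Sum>k\<in>UNIV. \<Sum>l\<in>UNIV.
          m (vsmul (r i j) (bvec i)) (vsmul (r k l) (bvec k)) p * bvec j q * bvec l s)
   = m (col q) (col s) p"
proof -
  have "m (col q) (col s) p = (\<Sum>i\<in>UNIV. \<Sum>k\<in>UNIV. r i q * r k s * m (bvec i) (bvec k) p)"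
    by (subst m_exp) (simp add: col_def)
  then show ?thesis
    by (simp add: msm bvec_app ifz_mult1 ifz_mult2 sum_if_const sum.delta sum.delta' algebra_simps)
qed

lemma T2: "(\<Sum>i\<in>UNIV. \<Sum>j\<in>UNIV. \<Sum>k\<in>UNIV. \<Sum>l\<in>UNIV.
          vsmul (r i j) (bvec i) p * m (bvec j) (vsmul (r k l) (bvec k)) q * bvec l s)
   = m (col p) (col s) q"
proof -
  have sy: "\<And>j. r p j = r j p" using symr by (simp add: sym2_def)
  have e: "\<And>j k l. m (bvec j) (vsmul (r k l) (bvec k)) q = r k l * m (bvec j) (bvec k) q"
    by (simp only: m_smul2) (simp add: vsmul_def)
  have "m (col p) (col s) q = (\<Sum>i\<in>UNIV. \<Sum>k\<in>UNIV. r i p * r k s * m (bvec i) (bvec k) q)"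
    by (subst m_exp) (simp add: col_def)
  then show ?thesis
    by (simp add: e sy vsmul_app bvec_app ifz_mult1 ifz_mult2 sum_if_const sum.delta sum.delta' algebra_simps)
qed

lemma T3: "(\<Sum>i\<in>UNIV. \<Sum>j\<in>UNIV. \<Sum>k\<in>UNIV. \<Sum>l\<in>UNIV.
          vsmul (r i j) (bvec i) p * vsmul (r k l) (bvec k) q * comm m (bvec j) (bvec l) s)
   = comm m (col p) (col q) s"
proof -
  have sy: "\<And>j. r p j = r j p" "\<And>j. r q j = r j q" using symr by (simp_all add: sym2_def)
  have "comm m (col p) (col q) s = (\<Sum>i\<in>UNIV. \<Sum>k\<in>UNIV. r i p * r k q * comm m (bvec i) (bvec k) s)"
    by (subst comm_exp) (simp add: col_def)
  then show ?thesis
    by (simp add: sy vsmul_app bvec_app ifz_mult1 ifz_mult2 sum_if_const sum.delta sum.delta' algebra_simps)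
qed

lemma RR: "rr m r p q s = - m (col q) (col s) p + m (col p) (col s) q + comm m (col p) (col q) s"
  unfolding rr_def T1 T2 T3 ..


lemma col_sharp: "(\<lambda>i. \<Sum>s\<in>UNIV. g s * col s i) = sharp r g"
  using sharp_V[OF symr] by (simp add: col_def)

lemma hv1: "(\<lambda>i. \<Sum>s\<in>UNIV. g s * m u (col s) i) = m u (sharp r g)"
proof -
  have "m u (\<lambda>i. \<Sum>s\<in>UNIV. g s * col s i) = (\<lambda>i. \<Sum>s\<in>UNIV. g s * m u (col s) i)"
    by (rule lin_sum[OF ml2]) simp
  then show ?thesis unfolding col_sharp by simp
qed
lemma hv2: "(\<lambda>i. \<Sum>s\<in>UNIV. g s * m (col s) u i) = m (sharp r g) u"
proof -
  have "(\<lambda>x. m x u) (\<lambda>i. \<Sum>s\<in>UNIV. g s * col s i) = (\<lambda>i. \<Sum>s\<in>UNIV. g s * m (col s) u i)"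
    by (rule lin_sum[OF ml1]) simp
  then show ?thesis unfolding col_sharp by simp
qed
lemma hv3: "(\<lambda>i. \<Sum>s\<in>UNIV. g s * comm m u (col s) i) = comm m u (sharp r g)"
proof -
  have "comm m u (\<lambda>i. \<Sum>s\<in>UNIV. g s * col s i) = (\<lambda>i. \<Sum>s\<in>UNIV. g s * comm m u (col s) i)"
    by (rule lin_sum[OF cl2]) simp
  then show ?thesis unfolding col_sharp by simp
qed
lemma hv4: "(\<lambda>i. \<Sum>s\<in>UNIV. g s * comm m (col s) u i) = comm m (sharp r g) u"
proof -
  have "(\<lambda>x. comm m x u) (\<lambda>i. \<Sum>s\<in>UNIV. g s * col s i) = (\<lambda>i. \<Sum>s\<in>UNIV. g s * comm m (col s) u i)"
    by (rule lin_sum[OF cl1]) simp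
  then show ?thesis unfolding col_sharp by simp
qed
lemma h1: "(\<Sum>s\<in>UNIV. g s * m u (col s) p) = m u (sharp r g) p"
  using hv1 by (metis (no_types, lifting))
lemma h2: "(\<Sum>s\<in>UNIV. g s * m (col s) u p) = m (sharp r g) u p"
  using hv2 by (metis (no_types, lifting))
lemma ps: "(\<Sum>s\<in>UNIV. g s * v s) = pair g v" by (simp add: pair_def)

lemma Aid: "- pair al (m (sharp r be) (sharp r ga)) + pair be (m (sharp r al) (sharp r ga))
   + pair ga (comm m (sharp r al) (sharp r be)) = 0"
proof -
  define a where "a = sharp r al"
  define b where "b = sharp r be"
  define c where "c = sharp r ga"
  have L1: "(\<Sum>s\<in>UNIV. ga s * rr m r p q s) = - m (col q) c p + m (col p) c q + pair ga (comm m (col p) (col q))"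
    for p q
  proof -
    have "(\<Sum>s\<in>UNIV. ga s * rr m r p q s) = (\<Sum>s\<in>UNIV. - (ga s * m (col q) (col s) p) + ga s * m (col p) (col s) q
       + ga s * comm m (col p) (col q) s)"
      by (simp add: RR algebra_simps)
    also have "\<dots> = - (\<Sum>s\<in>UNIV. ga s * m (col q) (col s) p) + (\<Sum>s\<in>UNIV. ga s * m (col p) (col s) q)
       + (\<Sum>s\<in>UNIV. ga s * comm m (col p) (col q) s)"
      by (simp add: sum.distrib sum_negf sum_subtractf)
    finally show ?thesis unfolding h1 ps c_def .
  qed
  have L2: "(\<Sum>q\<in>UNIV. be q * (\<Sum>s\<in>UNIV. ga s * rr m r p q s)) = - m b c p + pair be (m (col p) c) + pair ga (comm m (col p) b)"
    for p
  proof -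
    have "(\<Sum>q\<in>UNIV. be q * (\<Sum>s\<in>UNIV. ga s * rr m r p q s)) = (\<Sum>q\<in>UNIV. - (be q * m (col q) c p) + be q * m (col p) c q
       + be q * pair ga (comm m (col p) (col q)))"
      by (simp add: L1 algebra_simps)
    also have "\<dots> = - (\<Sum>q\<in>UNIV. be q * m (col q) c p) + (\<Sum>q\<in>UNIV. be q * m (col p) c q)
       + (\<Sum>q\<in>UNIV. be q * pair ga (comm m (col p) (col q)))"
      by (simp add: sum.distrib sum_negf sum_subtractf)
    also have "(\<Sum>q\<in>UNIV. be q * pair ga (comm m (col p) (col q))) = pair ga (comm m (col p) b)"
      unfolding pair_sum2[symmetric] hv3 b_def ..
    finally show ?thesis unfolding h2 ps b_def .
  qed
  have "(\<Sum>p\<in>UNIV. al p * (\<Sum>q\<in>UNIV. be q * (\<Sum>s\<in>UNIV. ga s * rr m r p q s))) = 0"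
    by (simp add: rr0)
  moreover have "(\<Sum>p\<in>UNIV. al p * (\<Sum>q\<in>UNIV. be q * (\<Sum>s\<in>UNIV. ga s * rr m r p q s)))
      = (\<Sum>p\<in>UNIV. - (al p * m b c p) + al p * pair be (m (col p) c) + al p * pair ga (comm m (col p) b))"
    by (simp add: L2 algebra_simps)
  moreover have "\<dots> = - (\<Sum>p\<in>UNIV. al p * m b c p) + (\<Sum>p\<in>UNIV. al p * pair be (m (col p) c))
       + (\<Sum>p\<in>UNIV. al p * pair ga (comm m (col p) b))"
    by (simp add: sum.distrib sum_negf sum_subtractf)
  moreover have "(\<Sum>p\<in>UNIV. al p * pair be (m (col p) c)) = pair be (m a c)"
    unfolding pair_sum2[symmetric] hv2 a_def ..
  moreover have "(\<Sum>p\<in>UNIV. al p * pair ga (comm m (col p) b)) = pair ga (comm m a b)"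
    unfolding pair_sum2[symmetric] hv4 a_def ..
  ultimately show ?thesis unfolding ps a_def b_def c_def by simp
qed

lemma LemA: "sharp r (r_bracket m r al be) = comm m (sharp r al) (sharp r be)"
proof (rule vec_eq)
  fix g
  have "pair g (sharp r (r_bracket m r al be)) = pair (r_bracket m r al be) (sharp r g)"
    by (rule sharp_sym[OF symr])
  also have "\<dots> = - pair be (m (sharp r al) (sharp r g)) + pair al (m (sharp r be) (sharp r g))"
    by (simp add: r_bracket_def vsub_eq pair_diff1 Lstar_pair)
  also have "\<dots> = pair g (comm m (sharp r al) (sharp r be))"
    using Aid[of al be g] by (simp add: algebra_simps)
  finally show "pair g (sharp r (r_bracket m r al be)) = pair g (comm m (sharp r al) (sharp r be))" .
qed


lemma rho_eq: "rho m r al x = comm m (sharp r al) x + sharp r (Lstar m x al)"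
  by (simp add: rho_def vadd_eq)

lemma Lstar_smul_x: "Lstar m (vsmul c x) a = vsmul c (Lstar m x a)"
  unfolding Lstar_def m_smul1 by (simp add: pair_def vsmul_def sum_distrib_left algebra_simps fun_eq_iff)

lemma vsmul_add: "vsmul c (x + y) = vsmul c x + vsmul c y"
  by (simp add: vsmul_def fun_eq_iff algebra_simps)

lemma rep: "rho m r (r_bracket m r al be) x = rho m r al (rho m r be x) - rho m r be (rho m r al x)"
proof -
  define a where "a = sharp r al"
  define b where "b = sharp r be"
  have A1: "sharp r (Lstar m (sharp r (Lstar m x be)) al) = comm m (sharp r (Lstar m x be)) a + sharp r (Lstar m a (Lstar m x be))"
    using LemA[of "Lstar m x be" al] unfolding r_bracket_def vsub_eq sharp_diff a_def by (simp add: algebra_simps)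
  have A2: "sharp r (Lstar m (sharp r (Lstar m x al)) be) = comm m (sharp r (Lstar m x al)) b + sharp r (Lstar m b (Lstar m x al))"
    using LemA[of "Lstar m x al" be] unfolding r_bracket_def vsub_eq sharp_diff b_def by (simp add: algebra_simps)
  have R1: "rho m r al (rho m r be x) = comm m a (comm m b x) + sharp r (Lstar m (comm m b x) al) + sharp r (Lstar m a (Lstar m x be))"
    unfolding rho_eq a_def[symmetric] b_def[symmetric]
    using A1 comm_anti[of "sharp r (Lstar m x be)" a]
    by (simp add: comm_add2 Lstar_add_x sharp_add algebra_simps)
  have R2: "rho m r be (rho m r al x) = comm m b (comm m a x) + sharp r (Lstar m (comm m a x) be) + sharp r (Lstar m b (Lstar m x al))"
    unfolding rho_eq a_def[symmetric] b_def[symmetric]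
    using A2 comm_anti[of "sharp r (Lstar m x al)" b]
    by (simp add: comm_add2 Lstar_add_x sharp_add algebra_simps)
  have S1: "sharp r (Lstar m (comm m b x) al) = - sharp r (Lstar m x (Lstar m b al)) + sharp r (Lstar m b (Lstar m x al))"
    using comm_anti[of b x] by (simp add: Lstar_neg_x Lstar_rep sharp_neg sharp_diff)
  have S2: "sharp r (Lstar m (comm m a x) be) = - sharp r (Lstar m x (Lstar m a be)) + sharp r (Lstar m a (Lstar m x be))"
    using comm_anti[of a x] by (simp add: Lstar_neg_x Lstar_rep sharp_neg sharp_diff)
  have L: "rho m r (r_bracket m r al be) x = comm m (comm m a b) x + sharp r (Lstar m x (Lstar m a be)) - sharp r (Lstar m x (Lstar m b al))"
    unfolding rho_eq LemA a_def b_def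
    by (simp add: r_bracket_def vsub_eq Lstar_diff_a sharp_diff)
  show ?thesis unfolding L R1 R2 S1 S2 jacobi[symmetric] by (simp add: algebra_simps)
qed

end

theorem proposition4p3:
  fixes m :: "('n::finite \<Rightarrow> 'k::field_char_0) \<Rightarrow> ('n \<Rightarrow> 'k) \<Rightarrow> ('n \<Rightarrow> 'k)"
    and r :: "'n \<Rightarrow> 'n \<Rightarrow> 'k"
  assumes "pre_lie m"
    and "s_matrix m r"
  shows "lie_rep (r_bracket m r) (rho m r)"
proof -
  interpret PL m r using assms by unfold_locales
  show ?thesis
    unfolding lie_rep_def
  proof (intro conjI allI)
    fix al
    show "lin_map (rho m r al)"
      unfolding lin_map_def vadd_eq
      by (simp add: rho_eq comm_add2 Lstar_add_x sharp_add comm_smul2 Lstar_smul_x sharp_smul vsmul_add)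
  next
    fix al be
    show "rho m r (vadd al be) = (\<lambda>x. vadd (rho m r al x) (rho m r be x))"
      by (simp add: vadd_eq rho_eq sharp_add comm_add1 Lstar_add_a fun_eq_iff)
  next
    fix c al
    show "rho m r (vsmul c al) = (\<lambda>x. vsmul c (rho m r al x))"
      by (simp add: rho_eq sharp_smul comm_smul1 Lstar_smul_a vsmul_add fun_eq_iff)
  next
    fix al be x
    show "rho m r (r_bracket m r al be) x = vsub (rho m r al (rho m r be x)) (rho m r be (rho m r al x))"
      by (simp add: vsub_eq rep)
  qed
qed

end
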